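(* Let $\psi$ be a formula of the positive Boolean closure $\mathcal B^+(\mathrm{HyperLTL})$. Then there exists a HyperLTL formula $\psi^*$ in prenex form that is equivalent to $\psi$ (i.e. $\llbracket\psi^*\rrbracket_T(\Pi)=\llbracket\psi\rrbracket_T(\Pi)$ for every non-empty set of traces $T$ and every trace assignment $\Pi$ defined on the free variables), such that $\alpha(\psi^* )\le\alpha(\psi)+1$ and $\psi^*$ contains the same number of existential quantifiers and the same number of universal quantifiers as $\psi$.
   Context: Fix a finite set $\mathrm{AP}$ of atomic propositions and an infinite set $\mathcal V$ of trace variables. A trace is an infinite sequence $t=t[0]t[1]\cdots$ with $t[i]\in[0,1]^{\mathrm{AP}}$; $t[i,\infty]$ is its suffix from position $i$. A trace assignment $\Pi$ is a partial map from $\mathcal V$ to traces; $\Pi[i,\infty]$ is $\pi\mapsto\Pi(\pi)[i,\infty]$, $\Pi[\pi\mapsto t]$ is $\Pi$ updated at $\pi$. $\mathcal B^+(\mathrm{HyperLTL})$ is given by the grammar $\psi::=\exists\pi\,\psi\mid\forall\pi\,\psi\mid\psi\vee\psi\mid\psi\wedge\psi\mid\phi$, $\phi::=p_\pi\mid\neg\phi\mid\phi\vee\phi\mid X\phi\mid\phi U\phi$ ($p\in\mathrm{AP}$, $\pi\in\mathcal V$). Semantics for non-empty $T$: $\llbracket p_\pi\rrbracket_T(\Pi)=\Pi(\pi)[0](p)$, $\llbracket\neg\phi\rrbracket=1-\llbracket\phi\rrbracket$, $\vee$ is $\max$, $\wedge$ is $\min$, $\llbracket X\phi\rrbracket_T(\Pi)=\llbracket\phi\rrbracket_T(\Pi[1,\infty])$,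 $\llbracket\phi_1U\phi_2\rrbracket_T(\Pi)=\sup_{i\ge0}\min\big(\llbracket\phi_2\rrbracket_T(\Pi[i,\infty]),\min_{0\le j<i}\llbracket\phi_1\rrbracket_T(\Pi[j,\infty])\big)$, $\llbracket\forall\pi\,\psi\rrbracket_T(\Pi)=\inf_{t\in T}\llbracket\psi\rrbracket_T(\Pi[\pi\mapsto t])$, $\llbracket\exists\pi\,\psi\rrbracket_T(\Pi)=\sup_{t\in T}\llbracket\psi\rrbracket_T(\Pi[\pi\mapsto t])$. HyperLTL is the fragment of formulas in prenex form: a sequence of quantifiers followed by a quantifier-free formula $\phi$. The alternation depth $\alpha(\psi)$ is the maximal number of alternations between existential and universal quantifiers (in either direction) along a branch of the syntax tree of $\psi$. *)

theory Defs
  imports Complex_Main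
begin

type_synonym 'ap trace = "nat \<Rightarrow> 'ap \<Rightarrow> real"

definition valid_trace :: "'ap trace \<Rightarrow> bool" where
  "valid_trace t \<longleftrightarrow> (\<forall>i p. 0 \<le> t i p \<and> t i p \<le> 1)"

definition suffix :: "nat \<Rightarrow> 'ap trace \<Rightarrow> 'ap trace" where
  "suffix i t = (\<lambda>n. t (n + i))"

type_synonym ('v,'ap) assignment = "'v \<Rightarrow> 'ap trace option"

definition shift_asg :: "nat \<Rightarrow> ('v,'ap) assignment \<Rightarrow> ('v,'ap) assignment" where
  "shift_asg i \<Pi> = (\<lambda>\<pi>. map_option (suffix i) (\<Pi> \<pi>))"

datatype ('v,'ap) qf =
    Prop 'ap 'v
  | Neg "('v,'ap) qf"
  | Disj "('v,'ap) qf" "('v,'ap) qf"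
  | Next "('v,'ap) qf"
  | Until "('v,'ap) qf" "('v,'ap) qf"

datatype ('v,'ap) hyp =
    Ex 'v "('v,'ap) hyp"
  | All 'v "('v,'ap) hyp"
  | HOr "('v,'ap) hyp" "('v,'ap) hyp"
  | HAnd "('v,'ap) hyp" "('v,'ap) hyp"
  | Qf "('v,'ap) qf"

text \<open>Quantitative semantics. The empty minimum (for i = 0 in Until) is 1, the top of [0,1].\<close>
fun sem_qf :: "('v,'ap) assignment \<Rightarrow> ('v,'ap) qf \<Rightarrow> real" where
  "sem_qf \<Pi> (Prop p \<pi>) = the (\<Pi> \<pi>) 0 p"
| "sem_qf \<Pi> (Neg \<phi>) = 1 - sem_qf \<Pi> \<phi>"
| "sem_qf \<Pi> (Disj \<phi> \<psi>) = max (sem_qf \<Pi> \<phi>) (sem_qf \<Pi> \<psi>)"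
| "sem_qf \<Pi> (Next \<phi>) = sem_qf (shift_asg 1 \<Pi>) \<phi>"
| "sem_qf \<Pi> (Until \<phi> \<psi>) =
     (SUP i. min (sem_qf (shift_asg i \<Pi>) \<psi>)
                 (Min (insert 1 ((\<lambda>j. sem_qf (shift_asg j \<Pi>) \<phi>) ` {..<i}))))"

fun sem :: "'ap trace set \<Rightarrow> ('v,'ap) assignment \<Rightarrow> ('v,'ap) hyp \<Rightarrow> real" where
  "sem T \<Pi> (Ex \<pi> \<psi>) = (SUP t\<in>T. sem T (\<Pi>(\<pi> \<mapsto> t)) \<psi>)"
| "sem T \<Pi> (All \<pi> \<psi>) = (INF t\<in>T. sem T (\<Pi>(\<pi> \<mapsto> t)) \<psi>)"
| "sem T \<Pi> (HOr \<psi>1 \<psi>2) = max (sem T \<Pi> \<psi>1) (sem T \<Pi> \<psi>2)"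
| "sem T \<Pi> (HAnd \<psi>1 \<psi>2) = min (sem T \<Pi> \<psi>1) (sem T \<Pi> \<psi>2)"
| "sem T \<Pi> (Qf \<phi>) = sem_qf \<Pi> \<phi>"

fun fv_qf :: "('v,'ap) qf \<Rightarrow> 'v set" where
  "fv_qf (Prop p \<pi>) = {\<pi>}"
| "fv_qf (Neg \<phi>) = fv_qf \<phi>"
| "fv_qf (Disj \<phi> \<psi>) = fv_qf \<phi> \<union> fv_qf \<psi>"
| "fv_qf (Next \<phi>) = fv_qf \<phi>"
| "fv_qf (Until \<phi> \<psi>) = fv_qf \<phi> \<union> fv_qf \<psi>"

fun fv :: "('v,'ap) hyp \<Rightarrow> 'v set" where
  "fv (Ex \<pi> \<psi>) = fv \<psi> - {\<pi>}"
| "fv (All \<pi> \<psi>) = fv \<psi> - {\<pi>}"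
| "fv (HOr \<psi>1 \<psi>2) = fv \<psi>1 \<union> fv \<psi>2"
| "fv (HAnd \<psi>1 \<psi>2) = fv \<psi>1 \<union> fv \<psi>2"
| "fv (Qf \<phi>) = fv_qf \<phi>"

text \<open>HyperLTL = prenex formulas: a quantifier prefix followed by a quantifier-free formula.\<close>
inductive prenex :: "('v,'ap) hyp \<Rightarrow> bool" where
  "prenex (Qf \<phi>)"
| "prenex \<psi> \<Longrightarrow> prenex (Ex \<pi> \<psi>)"
| "prenex \<psi> \<Longrightarrow> prenex (All \<pi> \<psi>)"

text \<open>Alternations along branches; the argument records the last quantifier seen on the
  branch (Some True = existential, Some False = universal, None = none yet).\<close>
fun alts :: "bool option \<Rightarrow> ('v,'ap) hyp \<Rightarrow> nat" where
  "alts q (Ex \<pi> \<psi>) = (if q = Some False then 1 else 0) + alts (Some True) \<psi>"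
| "alts q (All \<pi> \<psi>) = (if q = Some True then 1 else 0) + alts (Some False) \<psi>"
| "alts q (HOr \<psi>1 \<psi>2) = max (alts q \<psi>1) (alts q \<psi>2)"
| "alts q (HAnd \<psi>1 \<psi>2) = max (alts q \<psi>1) (alts q \<psi>2)"
| "alts q (Qf \<phi>) = 0"

definition alt_depth :: "('v,'ap) hyp \<Rightarrow> nat" where
  "alt_depth \<psi> = alts None \<psi>"

fun num_ex :: "('v,'ap) hyp \<Rightarrow> nat" where
  "num_ex (Ex \<pi> \<psi>) = Suc (num_ex \<psi>)"
| "num_ex (All \<pi> \<psi>) = num_ex \<psi>"
| "num_ex (HOr \<psi>1 \<psi>2) = num_ex \<psi>1 + num_ex \<psi>2"
| "num_ex (HAnd \<psi>1 \<psi>2) = num_ex \<psi>1 + num_ex \<psi>2"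
| "num_ex (Qf \<phi>) = 0"

fun num_all :: "('v,'ap) hyp \<Rightarrow> nat" where
  "num_all (Ex \<pi> \<psi>) = num_all \<psi>"
| "num_all (All \<pi> \<psi>) = Suc (num_all \<psi>)"
| "num_all (HOr \<psi>1 \<psi>2) = num_all \<psi>1 + num_all \<psi>2"
| "num_all (HAnd \<psi>1 \<psi>2) = num_all \<psi>1 + num_all \<psi>2"
| "num_all (Qf \<phi>) = 0"

end

theory Submission
  imports Defs
begin

definition okA :: "'v set \<Rightarrow> ('v,'ap) assignment \<Rightarrow> bool" where
  "okA A \<Pi> \<longleftrightarrow> (\<forall>v\<in>A. \<exists>t. \<Pi> v = Some t \<and> valid_trace t)"

definition opr :: "bool \<Rightarrow> real \<Rightarrow> real \<Rightarrow> real" where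
  "opr d a b = (if d then max a b else min a b)"

definition semQ :: "bool \<Rightarrow> 'a set \<Rightarrow> ('a \<Rightarrow> real) \<Rightarrow> real" where
  "semQ q T g = (if q then (SUP t\<in>T. g t) else (INF t\<in>T. g t))"

fun mk :: "(bool \<times> 'v) list \<Rightarrow> ('v,'ap) qf \<Rightarrow> ('v,'ap) hyp" where
  "mk [] \<phi> = Qf \<phi>"
| "mk (a#p) \<phi> = (if fst a then Ex (snd a) (mk p \<phi>) else All (snd a) (mk p \<phi>))"

fun altsl :: "bool \<Rightarrow> (bool \<times> 'v) list \<Rightarrow> nat" where
  "altsl b [] = 0"
| "altsl b (a#p) = (if fst a = b then 0 else 1) + altsl (fst a) p"

fun ren_qf :: "('v \<Rightarrow> 'v) \<Rightarrow> ('v,'ap) qf \<Rightarrow> ('v,'ap) qf" where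
  "ren_qf f (Prop p v) = Prop p (f v)"
| "ren_qf f (Neg \<phi>) = Neg (ren_qf f \<phi>)"
| "ren_qf f (Disj \<phi> \<psi>) = Disj (ren_qf f \<phi>) (ren_qf f \<psi>)"
| "ren_qf f (Next \<phi>) = Next (ren_qf f \<phi>)"
| "ren_qf f (Until \<phi> \<psi>) = Until (ren_qf f \<phi>) (ren_qf f \<psi>)"

definition cqf :: "bool \<Rightarrow> ('v,'ap) qf \<Rightarrow> ('v,'ap) qf \<Rightarrow> ('v,'ap) qf" where
  "cqf d \<phi>1 \<phi>2 = (if d then Disj \<phi>1 \<phi>2 else Neg (Disj (Neg \<phi>1) (Neg \<phi>2)))"

definition sw :: "'v \<Rightarrow> 'v \<Rightarrow> 'v \<Rightarrow> 'v" where
  "sw a b v = (if v = a then b else if v = b then a else v)"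

fun mergep :: "bool \<Rightarrow> (bool \<times> 'v) list \<Rightarrow> (bool \<times> 'v) list \<Rightarrow> (bool \<times> 'v) list" where
  "mergep b [] [] = []"
| "mergep b (a#p1) [] = a # mergep (fst a) p1 []"
| "mergep b [] (c#p2) = c # mergep (fst c) [] p2"
| "mergep b (a#p1) (c#p2) = (if fst a = b then a # mergep b p1 (c#p2)
     else if fst c = b then c # mergep b (a#p1) p2 else a # mergep (fst a) p1 (c#p2))"

lemma shift_comp: "shift_asg i (\<Pi> \<circ> f) = shift_asg i \<Pi> \<circ> f"
  by (auto simp: shift_asg_def)

lemma sem_qf_ren: "sem_qf \<Pi> (ren_qf f \<phi>) = sem_qf (\<Pi> \<circ> f) \<phi>"
  by (induction \<phi> arbitrary: \<Pi>) (simp_all add: shift_comp)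

lemma fv_qf_ren: "fv_qf (ren_qf f \<phi>) = f ` fv_qf \<phi>"
  by (induction \<phi>) auto

lemma finite_fv_qf: "finite (fv_qf \<phi>)"
  by (induction \<phi>) auto

lemma shift_agree: "\<forall>v\<in>A. \<Pi> v = \<Pi>' v \<Longrightarrow> \<forall>v\<in>A. shift_asg i \<Pi> v = shift_asg i \<Pi>' v"
  by (auto simp: shift_asg_def)

lemma sem_qf_local: "\<forall>v\<in>fv_qf \<phi>. \<Pi> v = \<Pi>' v \<Longrightarrow> sem_qf \<Pi> \<phi> = sem_qf \<Pi>' \<phi>"
proof (induction \<phi> arbitrary: \<Pi> \<Pi>')
  case (Next \<phi>)
  then show ?case using shift_agree[of "fv_qf \<phi>" \<Pi> \<Pi>' 1] by simp
next
  case (Until \<phi>1 \<phi>2)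
  have a: "\<And>i. sem_qf (shift_asg i \<Pi>) \<phi>1 = sem_qf (shift_asg i \<Pi>') \<phi>1"
    using Until shift_agree[of "fv_qf \<phi>1" \<Pi> \<Pi>'] by simp
  have b: "\<And>i. sem_qf (shift_asg i \<Pi>) \<phi>2 = sem_qf (shift_asg i \<Pi>') \<phi>2"
    using Until shift_agree[of "fv_qf \<phi>2" \<Pi> \<Pi>'] by simp
  show ?case by (simp add: a b)
next
  case (Disj a b)
  have "sem_qf \<Pi> a = sem_qf \<Pi>' a" by (rule Disj.IH(1)) (use Disj.prems in auto)
  moreover have "sem_qf \<Pi> b = sem_qf \<Pi>' b" by (rule Disj.IH(2)) (use Disj.prems in auto)
  ultimately show ?case by simp
qed auto

lemma sem_local: "\<forall>v\<in>fv \<psi>. \<Pi> v = \<Pi>' v \<Longrightarrow> sem T \<Pi> \<psi> = sem T \<Pi>' \<psi>"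
proof (induction \<psi> arbitrary: \<Pi> \<Pi>')
  case (Ex x \<psi>)
  have "\<And>t. sem T (\<Pi>(x\<mapsto>t)) \<psi> = sem T (\<Pi>'(x\<mapsto>t)) \<psi>"
    using Ex by (intro Ex.IH) auto
  then show ?case by simp
next
  case (All x \<psi>)
  have "\<And>t. sem T (\<Pi>(x\<mapsto>t)) \<psi> = sem T (\<Pi>'(x\<mapsto>t)) \<psi>"
    using All by (intro All.IH) auto
  then show ?case by simp
next
  case (HOr a b)
  have "sem T \<Pi> a = sem T \<Pi>' a" by (rule HOr.IH(1)) (use HOr.prems in auto)
  moreover have "sem T \<Pi> b = sem T \<Pi>' b" by (rule HOr.IH(2)) (use HOr.prems in auto)
  ultimately show ?case by simp
next
  case (HAnd a b)
  have "sem T \<Pi> a = sem T \<Pi>' a" by (rule HAnd.IH(1)) (use HAnd.prems in auto)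
  moreover have "sem T \<Pi> b = sem T \<Pi>' b" by (rule HAnd.IH(2)) (use HAnd.prems in auto)
  ultimately show ?case by simp
qed (auto intro: sem_qf_local)

lemma okA_shift: "okA A \<Pi> \<Longrightarrow> okA A (shift_asg i \<Pi>)"
  by (auto simp: okA_def shift_asg_def valid_trace_def suffix_def)

lemma okA_mono: "okA A \<Pi> \<Longrightarrow> B \<subseteq> A \<Longrightarrow> okA B \<Pi>"
  by (auto simp: okA_def)

lemma okA_upd: "okA (A - {x}) \<Pi> \<Longrightarrow> valid_trace t \<Longrightarrow> okA A (\<Pi>(x\<mapsto>t))"
  by (auto simp: okA_def)

lemma sem_qf_bnd: "okA (fv_qf \<phi>) \<Pi> \<Longrightarrow> 0 \<le> sem_qf \<Pi> \<phi> \<and> sem_qf \<Pi> \<phi> \<le> 1"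
proof (induction \<phi> arbitrary: \<Pi>)
  case (Prop p v)
  then show ?case by (auto simp: okA_def valid_trace_def)
next
  case (Neg \<phi>)
  then show ?case by auto
next
  case (Disj \<phi>1 \<phi>2)
  then show ?case by (auto intro: okA_mono simp: max_def)
next
  case (Next \<phi>)
  then show ?case using okA_shift by auto
next
  case (Until \<phi>1 \<phi>2)
  define f where "f i = min (sem_qf (shift_asg i \<Pi>) \<phi>2)
                 (Min (insert 1 ((\<lambda>j. sem_qf (shift_asg j \<Pi>) \<phi>1) ` {..<i})))" for i
  have o1: "okA (fv_qf \<phi>1) \<Pi>" using Until.prems by (rule okA_mono) auto
  have o2: "okA (fv_qf \<phi>2) \<Pi>" using Until.prems by (rule okA_mono) auto
  have b1: "0 \<le> sem_qf (shift_asg j \<Pi>) \<phi>1 \<and> sem_qf (shift_asg j \<Pi>) \<phi>1 \<le> 1" for j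
    by (rule Until.IH(1)) (rule okA_shift[OF o1])
  have b2: "0 \<le> sem_qf (shift_asg j \<Pi>) \<phi>2 \<and> sem_qf (shift_asg j \<Pi>) \<phi>2 \<le> 1" for j
    by (rule Until.IH(2)) (rule okA_shift[OF o2])
  have m: "0 \<le> Min (insert 1 ((\<lambda>j. sem_qf (shift_asg j \<Pi>) \<phi>1) ` {..<i}))" for i
    using b1 by (subst Min_ge_iff) auto
  have f: "0 \<le> f i \<and> f i \<le> 1" for i
    using b2[of i] m[of i] unfolding f_def by linarith
  have bdd: "bdd_above (range f)" using f by (auto intro!: bdd_aboveI[where M=1])
  have "0 \<le> (SUP i. f i)" using f[of 0] cSUP_upper[OF _ bdd, of 0] by fastforce
  moreover have "(SUP i. f i) \<le> 1" using f by (auto intro: cSUP_least)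
  ultimately show ?case by (simp add: f_def[symmetric])
qed

lemma sem_bnd: "T \<noteq> {} \<Longrightarrow> \<forall>t\<in>T. valid_trace t \<Longrightarrow> okA (fv \<psi>) \<Pi> \<Longrightarrow> 0 \<le> sem T \<Pi> \<psi> \<and> sem T \<Pi> \<psi> \<le> 1"
proof (induction \<psi> arbitrary: \<Pi>)
  case (Ex x \<psi>)
  have b: "t \<in> T \<Longrightarrow> 0 \<le> sem T (\<Pi>(x\<mapsto>t)) \<psi> \<and> sem T (\<Pi>(x\<mapsto>t)) \<psi> \<le> 1" for t
    using Ex.prems by (intro Ex.IH okA_upd) auto
  from Ex.prems obtain t0 where t0: "t0 \<in> T" by auto
  have bdd: "bdd_above ((\<lambda>t. sem T (\<Pi>(x\<mapsto>t)) \<psi>) ` T)" using b by (auto intro!: bdd_aboveI[where M=1])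
  show ?case using b[OF t0] cSUP_upper[OF t0 bdd] b Ex.prems(1)
    by (auto intro: cSUP_least order_trans)
next
  case (All x \<psi>)
  have b: "t \<in> T \<Longrightarrow> 0 \<le> sem T (\<Pi>(x\<mapsto>t)) \<psi> \<and> sem T (\<Pi>(x\<mapsto>t)) \<psi> \<le> 1" for t
    using All.prems by (intro All.IH okA_upd) auto
  from All.prems obtain t0 where t0: "t0 \<in> T" by auto
  have bdd: "bdd_below ((\<lambda>t. sem T (\<Pi>(x\<mapsto>t)) \<psi>) ` T)" using b by (auto intro!: bdd_belowI[where m=0])
  show ?case using b[OF t0] cINF_lower[OF bdd t0] b All.prems(1)
    by (auto intro: cINF_greatest order_trans)
next
  case (HOr a c)
  then show ?case by (auto intro: okA_mono simp: max_def)
next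
  case (HAnd a c)
  then show ?case by (auto intro: okA_mono simp: min_def)
next
  case (Qf \<phi>)
  then show ?case using sem_qf_bnd[of \<phi> \<Pi>] by simp
qed


lemma sup_max:
  fixes g :: "'a \<Rightarrow> real"
  assumes "T \<noteq> {}" "bdd_above (g ` T)"
  shows "(SUP t\<in>T. max (g t) K) = max (SUP t\<in>T. g t) K"
proof (rule antisym)
  show "(SUP t\<in>T. max (g t) K) \<le> max (SUP t\<in>T. g t) K"
  proof (intro cSUP_least)
    show "T \<noteq> {}" by (rule assms(1))
    fix x assume "x \<in> T"
    then have "g x \<le> (SUP t\<in>T. g t)" by (rule cSUP_upper[OF _ assms(2)])
    then show "max (g x) K \<le> max (SUP t\<in>T. g t) K" by (auto simp: max_def)
  qed
next
  obtain t0 where t0: "t0 \<in> T" using assms by auto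
  have bdd: "bdd_above ((\<lambda>t. max (g t) K) ` T)"
  proof -
    obtain M where "\<forall>t\<in>T. g t \<le> M" using assms(2) by (auto simp: bdd_above_def)
    then show ?thesis by (intro bdd_aboveI[where M="max M K"]) auto
  qed
  have "(SUP t\<in>T. g t) \<le> (SUP t\<in>T. max (g t) K)"
  proof (rule cSUP_mono[OF assms(1) bdd])
    fix n assume "n \<in> T"
    then show "\<exists>m\<in>T. g n \<le> max (g m) K" by force
  qed
  moreover have "K \<le> (SUP t\<in>T. max (g t) K)"
    using cSUP_upper[OF t0 bdd] by simp
  ultimately show "max (SUP t\<in>T. g t) K \<le> (SUP t\<in>T. max (g t) K)" by simp
qed

lemma sup_min:
  fixes g :: "'a \<Rightarrow> real"
  assumes "T \<noteq> {}" "bdd_above (g ` T)"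
  shows "(SUP t\<in>T. min (g t) K) = min (SUP t\<in>T. g t) K"
proof (rule antisym)
  show "(SUP t\<in>T. min (g t) K) \<le> min (SUP t\<in>T. g t) K"
    using assms by (intro cSUP_least) (auto intro: cSUP_upper2 simp: min_le_iff_disj)
next
  obtain M where M: "\<forall>t\<in>T. g t \<le> M" using assms(2) by (auto simp: bdd_above_def)
  have bdd: "bdd_above ((\<lambda>t. min (g t) K) ` T)"
    using M by (intro bdd_aboveI[where M="M"]) auto
  show "min (SUP t\<in>T. g t) K \<le> (SUP t\<in>T. min (g t) K)"
  proof (cases "(SUP t\<in>T. g t) \<le> K")
    case True
    have "\<forall>t\<in>T. min (g t) K = g t"
    proof
      fix t assume "t \<in> T"
      then have "g t \<le> (SUP t\<in>T. g t)" by (rule cSUP_upper[OF _ assms(2)])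
      with True have "g t \<le> K" by linarith
      then show "min (g t) K = g t" by simp
    qed
    then have "(SUP t\<in>T. min (g t) K) = (SUP t\<in>T. g t)" by (intro SUP_cong) auto
    then show ?thesis by simp
  next
    case False
    then obtain t where t: "t \<in> T" "K < g t" using less_cSUP_iff[OF assms] by (meson not_le)
    then have "K \<le> (SUP t\<in>T. min (g t) K)" using cSUP_upper[OF t(1) bdd] by simp
    then show ?thesis by simp
  qed
qed

lemma inf_min:
  fixes g :: "'a \<Rightarrow> real"
  assumes "T \<noteq> {}" "bdd_below (g ` T)"
  shows "(INF t\<in>T. min (g t) K) = min (INF t\<in>T. g t) K"
proof (rule antisym)
  obtain t0 where t0: "t0 \<in> T" using assms by auto
  obtain M where M: "\<forall>t\<in>T. M \<le> g t" using assms(2) by (auto simp: bdd_below_def)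
  have bdd: "bdd_below ((\<lambda>t. min (g t) K) ` T)"
    using M by (intro bdd_belowI[where m="min M K"]) auto
  have l: "t \<in> T \<Longrightarrow> (INF t\<in>T. min (g t) K) \<le> min (g t) K" for t
    by (rule cINF_lower[OF bdd])
  have "(INF t\<in>T. min (g t) K) \<le> (INF t\<in>T. g t)"
  proof (rule cINF_greatest[OF assms(1)])
    fix t assume "t \<in> T"
    from l[OF this] show "(INF t\<in>T. min (g t) K) \<le> g t" by simp
  qed
  moreover have "(INF t\<in>T. min (g t) K) \<le> K" using l[OF t0] by simp
  ultimately show "(INF t\<in>T. min (g t) K) \<le> min (INF t\<in>T. g t) K" by simp
next
  show "min (INF t\<in>T. g t) K \<le> (INF t\<in>T. min (g t) K)"
  proof (rule cINF_greatest[OF assms(1)])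
    fix t assume "t \<in> T"
    then have "(INF t\<in>T. g t) \<le> g t" by (rule cINF_lower[OF assms(2)])
    then show "min (INF t\<in>T. g t) K \<le> min (g t) K" by (simp add: min_def)
  qed
qed

lemma inf_max:
  fixes g :: "'a \<Rightarrow> real"
  assumes "T \<noteq> {}" "bdd_below (g ` T)"
  shows "(INF t\<in>T. max (g t) K) = max (INF t\<in>T. g t) K"
proof (rule antisym)
  show "max (INF t\<in>T. g t) K \<le> (INF t\<in>T. max (g t) K)"
  proof (rule cINF_greatest[OF assms(1)])
    fix t assume "t \<in> T"
    then have "(INF t\<in>T. g t) \<le> g t" by (rule cINF_lower[OF assms(2)])
    then show "max (INF t\<in>T. g t) K \<le> max (g t) K" by (simp add: max_def)
  qed
next
  obtain M where M: "\<forall>t\<in>T. M \<le> g t" using assms(2) by (auto simp: bdd_below_def)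
  have bdd: "bdd_below ((\<lambda>t. max (g t) K) ` T)"
    using M by (intro bdd_belowI[where m="M"]) auto
  show "(INF t\<in>T. max (g t) K) \<le> max (INF t\<in>T. g t) K"
  proof (cases "K \<le> (INF t\<in>T. g t)")
    case True
    have "\<forall>t\<in>T. max (g t) K = g t"
    proof
      fix t assume "t \<in> T"
      then have "(INF t\<in>T. g t) \<le> g t" by (rule cINF_lower[OF assms(2)])
      with True have "K \<le> g t" by linarith
      then show "max (g t) K = g t" by simp
    qed
    then have "(INF t\<in>T. max (g t) K) = (INF t\<in>T. g t)" by (intro INF_cong) auto
    then show ?thesis by simp
  next
    case False
    then obtain t where t: "t \<in> T" "g t < K" using cINF_less_iff[OF assms] by (meson not_le)
    then have "(INF t\<in>T. max (g t) K) \<le> K" using cINF_lower[OF bdd t(1)] by simp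
    then show ?thesis by simp
  qed
qed

lemma semQ_opr:
  fixes g :: "'a \<Rightarrow> real"
  assumes "T \<noteq> {}" "\<forall>t\<in>T. 0 \<le> g t \<and> g t \<le> 1"
  shows "semQ q T (\<lambda>t. opr d (g t) K) = opr d (semQ q T g) K"
proof -
  have a: "bdd_above (g ` T)" using assms by (auto intro!: bdd_aboveI[where M=1])
  have b: "bdd_below (g ` T)" using assms by (auto intro!: bdd_belowI[where m=0])
  show ?thesis unfolding semQ_def opr_def
    using sup_max[OF assms(1) a] sup_min[OF assms(1) a] inf_max[OF assms(1) b] inf_min[OF assms(1) b]
    by simp
qed

lemma opr_comm: "opr d a b = opr d b a" by (auto simp: opr_def)

lemma sem_mk_cons: "sem T \<Pi> (mk (a#p) \<phi>) = semQ (fst a) T (\<lambda>t. sem T (\<Pi>(snd a \<mapsto> t)) (mk p \<phi>))"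
  by (simp add: semQ_def)

lemma fv_mk: "fv (mk p \<phi>) = fv_qf \<phi> - snd ` set p"
  by (induction p) auto

lemma sem_cqf: "sem_qf \<Pi> (cqf d \<phi>1 \<phi>2) = opr d (sem_qf \<Pi> \<phi>1) (sem_qf \<Pi> \<phi>2)"
  by (auto simp: cqf_def opr_def max_def min_def)

lemma fv_cqf: "fv_qf (cqf d \<phi>1 \<phi>2) = fv_qf \<phi>1 \<union> fv_qf \<phi>2"
  by (auto simp: cqf_def)

lemma fv_mk_cons: "fv (mk (a#p) \<phi>) = fv (mk p \<phi>) - {snd a}"
  by (cases "fst a") auto

declare mk.simps(2)[simp del]

lemma step_left:
  assumes "T \<noteq> {}" "\<forall>t\<in>T. valid_trace t" "okA (fv (mk (a#p1) \<phi>1)) \<Pi>"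
    and IH: "\<And>t. t\<in>T \<Longrightarrow> sem T (\<Pi>(snd a \<mapsto> t)) (mk m \<phi>) =
               opr d (sem T (\<Pi>(snd a\<mapsto>t)) (mk p1 \<phi>1)) (sem T (\<Pi>(snd a \<mapsto> t)) C)"
    and "snd a \<notin> fv C"
  shows "sem T \<Pi> (mk (a#m) \<phi>) = opr d (sem T \<Pi> (mk (a#p1) \<phi>1)) (sem T \<Pi> C)"
proof -
  have loc: "sem T (\<Pi>(snd a \<mapsto> t)) C = sem T \<Pi> C" for t
    using assms(5) by (intro sem_local) auto
  have bnd: "\<forall>t\<in>T. 0 \<le> sem T (\<Pi>(snd a\<mapsto>t)) (mk p1 \<phi>1) \<and> sem T (\<Pi>(snd a\<mapsto>t)) (mk p1 \<phi>1) \<le> 1"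
  proof
    fix t assume "t \<in> T"
    moreover have "okA (fv (mk p1 \<phi>1) - {snd a}) \<Pi>" using assms(3) unfolding fv_mk_cons .
    ultimately show "0 \<le> sem T (\<Pi>(snd a\<mapsto>t)) (mk p1 \<phi>1) \<and> sem T (\<Pi>(snd a\<mapsto>t)) (mk p1 \<phi>1) \<le> 1"
      using assms(1,2) by (intro sem_bnd okA_upd) auto
  qed
  have "sem T \<Pi> (mk (a#m) \<phi>) = semQ (fst a) T (\<lambda>t. opr d (sem T (\<Pi>(snd a\<mapsto>t)) (mk p1 \<phi>1)) (sem T \<Pi> C))"
    unfolding sem_mk_cons using IH loc by (simp add: semQ_def)
  also have "\<dots> = opr d (sem T \<Pi> (mk (a#p1) \<phi>1)) (sem T \<Pi> C)"
    using semQ_opr[OF assms(1) bnd] sem_mk_cons by metis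
  finally show ?thesis .
qed


lemma okA_cons: "okA (fv (mk (a#p) \<phi>)) \<Pi> \<Longrightarrow> valid_trace t \<Longrightarrow> okA (fv (mk p \<phi>)) (\<Pi>(snd a \<mapsto> t))"
  unfolding fv_mk_cons by (rule okA_upd)

lemma okA_upd2: "okA A \<Pi> \<Longrightarrow> x \<notin> A \<Longrightarrow> okA A (\<Pi>(x \<mapsto> t))"
  by (auto simp: okA_def)

lemma left_step2:
  assumes "T \<noteq> {}" "\<forall>t\<in>T. valid_trace t" "okA (fv (mk (a#p1) \<phi>1)) \<Pi>" "okA (fv C) \<Pi>"
    "snd a \<notin> fv C"
    and IH: "\<And>\<Pi>'. okA (fv (mk p1 \<phi>1)) \<Pi>' \<Longrightarrow> okA (fv C) \<Pi>' \<Longrightarrow>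
      sem T \<Pi>' (mk m \<phi>) = opr d (sem T \<Pi>' (mk p1 \<phi>1)) (sem T \<Pi>' C)"
  shows "sem T \<Pi> (mk (a#m) \<phi>) = opr d (sem T \<Pi> (mk (a#p1) \<phi>1)) (sem T \<Pi> C)"
proof (rule step_left[OF assms(1,2,3) _ assms(5)])
  fix t assume "t \<in> T"
  then have "valid_trace t" using assms(2) by auto
  then show "sem T (\<Pi>(snd a \<mapsto> t)) (mk m \<phi>) =
               opr d (sem T (\<Pi>(snd a\<mapsto>t)) (mk p1 \<phi>1)) (sem T (\<Pi>(snd a \<mapsto> t)) C)"
    using assms(3,4,5) by (intro IH okA_cons okA_upd2)
qed

lemma right_step2:
  assumes "T \<noteq> {}" "\<forall>t\<in>T. valid_trace t" "okA (fv (mk (a#p2) \<phi>2)) \<Pi>" "okA (fv C) \<Pi>"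
    "snd a \<notin> fv C"
    and IH: "\<And>\<Pi>'. okA (fv C) \<Pi>' \<Longrightarrow> okA (fv (mk p2 \<phi>2)) \<Pi>' \<Longrightarrow>
      sem T \<Pi>' (mk m \<phi>) = opr d (sem T \<Pi>' C) (sem T \<Pi>' (mk p2 \<phi>2))"
  shows "sem T \<Pi> (mk (a#m) \<phi>) = opr d (sem T \<Pi> C) (sem T \<Pi> (mk (a#p2) \<phi>2))"
proof -
  have "sem T \<Pi> (mk (a#m) \<phi>) = opr d (sem T \<Pi> (mk (a#p2) \<phi>2)) (sem T \<Pi> C)"
    apply (rule left_step2[OF assms(1-5)])
    apply (subst opr_comm)
    apply (rule IH)
     apply assumption+
    done
  then show ?thesis by (subst opr_comm)
qed

lemma mergep_sem:
  assumes "snd ` set p1 \<inter> fv_qf \<phi>2 = {}" "snd ` set p2 \<inter> fv_qf \<phi>1 = {}" "T \<noteq> {}"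
    "\<forall>t\<in>T. valid_trace t" "okA (fv (mk p1 \<phi>1)) \<Pi>" "okA (fv (mk p2 \<phi>2)) \<Pi>"
  shows "sem T \<Pi> (mk (mergep b p1 p2) (cqf d \<phi>1 \<phi>2)) = opr d (sem T \<Pi> (mk p1 \<phi>1)) (sem T \<Pi> (mk p2 \<phi>2))"
  using assms
proof (induction b p1 p2 arbitrary: \<Pi> rule: mergep.induct)
  case (1 b)
  then show ?case by (simp add: sem_cqf)
next
  case (2 b a p1)
  show ?case unfolding mergep.simps(2)
    by (rule left_step2; (rule "2.IH")?; use "2.prems"  in \<open>auto simp: fv_mk\<close>)
next
  case (3 b c p2)
  show ?case unfolding mergep.simps(3)
    by (rule right_step2; (rule "3.IH")?; use "3.prems"  in \<open>auto simp: fv_mk\<close>)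
next
  case (4 b a p1 c p2)
  show ?case
  proof (cases "fst a = b")
    case True
    show ?thesis unfolding mergep.simps(4) if_P[OF True]
      apply (rule left_step2)
      subgoal using "4.prems" by (auto simp: fv_mk)
      subgoal using "4.prems" by (auto simp: fv_mk)
      subgoal using "4.prems" by (auto simp: fv_mk)
      subgoal using "4.prems" by (auto simp: fv_mk)
      subgoal using "4.prems" by (auto simp: fv_mk)
      apply (rule "4.IH"(1))
      subgoal by (rule True)
      subgoal using "4.prems" by (auto simp: fv_mk)
      subgoal using "4.prems" by (auto simp: fv_mk)
      subgoal using "4.prems" by (auto simp: fv_mk)
      subgoal using "4.prems" by (auto simp: fv_mk)
      subgoal using "4.prems" by (auto simp: fv_mk)
      subgoal using "4.prems" by (auto simp: fv_mk)
      done
  next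
    case F1: False
    show ?thesis
    proof (cases "fst c = b")
      case True
      show ?thesis unfolding mergep.simps(4) if_not_P[OF F1] if_P[OF True]
      apply (rule right_step2)
      subgoal using "4.prems" by (auto simp: fv_mk)
      subgoal using "4.prems" by (auto simp: fv_mk)
      subgoal using "4.prems" by (auto simp: fv_mk)
      subgoal using "4.prems" by (auto simp: fv_mk)
      subgoal using "4.prems" by (auto simp: fv_mk)
      apply (rule "4.IH"(2))
      subgoal by (rule F1)
      subgoal by (rule True)
      subgoal using "4.prems" by (auto simp: fv_mk)
      subgoal using "4.prems" by (auto simp: fv_mk)
      subgoal using "4.prems" by (auto simp: fv_mk)
      subgoal using "4.prems" by (auto simp: fv_mk)
      subgoal using "4.prems" by (auto simp: fv_mk)
      subgoal using "4.prems" by (auto simp: fv_mk)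
      done
    next
      case False
      show ?thesis unfolding mergep.simps(4) if_not_P[OF F1] if_not_P[OF False]
      apply (rule left_step2)
      subgoal using "4.prems" by (auto simp: fv_mk)
      subgoal using "4.prems" by (auto simp: fv_mk)
      subgoal using "4.prems" by (auto simp: fv_mk)
      subgoal using "4.prems" by (auto simp: fv_mk)
      subgoal using "4.prems" by (auto simp: fv_mk)
      apply (rule "4.IH"(3))
      subgoal by (rule F1)
      subgoal by (rule False)
      subgoal using "4.prems" by (auto simp: fv_mk)
      subgoal using "4.prems" by (auto simp: fv_mk)
      subgoal using "4.prems" by (auto simp: fv_mk)
      subgoal using "4.prems" by (auto simp: fv_mk)
      subgoal using "4.prems" by (auto simp: fv_mk)
      subgoal using "4.prems" by (auto simp: fv_mk)
      done
    qed
  qed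
qed


lemma alts_mk: "alts (Some b) (mk p \<phi>) = altsl b p"
  by (induction p arbitrary: b) (auto simp: mk.simps(2))

lemma alts_None_le: "alts None \<psi> \<le> alts (Some q) \<psi>"
  by (induction \<psi>) auto

lemma alts_Some_le: "alts (Some q) \<psi> \<le> alts None \<psi> + 1"
  by (induction \<psi>) auto

lemma altsl_mergep: "altsl b (mergep b p1 p2) \<le> max (altsl b p1) (altsl b p2)"
  by (induction b p1 p2 rule: mergep.induct) auto

lemma altsl_fst: "map fst p = map fst p' \<Longrightarrow> altsl b p = altsl b p'"
proof (induction p arbitrary: b p')
  case Nil then show ?case by simp
next
  case (Cons a p) then show ?case by (cases p') auto
qed

lemma num_ex_mk: "num_ex (mk p \<phi>) = length (filter fst p)"
  by (induction p) (auto simp: mk.simps(2))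

lemma num_all_mk: "num_all (mk p \<phi>) = length (filter (\<lambda>a. \<not> fst a) p)"
  by (induction p) (auto simp: mk.simps(2))

lemma filter_mergep: "length (filter P (mergep b p1 p2)) = length (filter P p1) + length (filter P p2)"
  by (induction b p1 p2 rule: mergep.induct) auto

lemma filter_fst1: "map fst p = map fst p' \<Longrightarrow> length (filter fst p) = length (filter fst p')"
proof (induction p arbitrary: p')
  case Nil then show ?case by simp
next
  case (Cons a p) then show ?case by (cases p') auto
qed

lemma filter_fst2: "map fst p = map fst p' \<Longrightarrow> length (filter (\<lambda>a. \<not> fst a) p) = length (filter (\<lambda>a. \<not> fst a) p')"
proof (induction p arbitrary: p')
  case Nil then show ?case by simp
next
  case (Cons a p) then show ?case by (cases p') auto
qed

lemma set_mergep: "set (mergep b p1 p2) = set p1 \<union> set p2"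
  by (induction b p1 p2 rule: mergep.induct) auto

lemma prenex_mk: "prenex (mk p \<phi>)"
  by (induction p) (auto simp: mk.simps(2) intro: prenex.intros)

lemma inj_sw: "inj (sw a b)"
  unfolding inj_def sw_def by auto

lemma upd_comp: "inj f \<Longrightarrow> (\<Pi>(f x \<mapsto> t)) \<circ> f = (\<Pi> \<circ> f)(x \<mapsto> t)"
  by (auto simp: fun_eq_iff inj_eq)

lemma sem_mk_ren: "inj f \<Longrightarrow> sem T \<Pi> (mk (map (apsnd f) p) (ren_qf f \<phi>)) = sem T (\<Pi> \<circ> f) (mk p \<phi>)"
proof (induction p arbitrary: \<Pi>)
  case Nil then show ?case by (simp add: sem_qf_ren comp_def)
next
  case (Cons a p)
  have e: "\<And>t. (\<Pi>(f (snd a) \<mapsto> t)) \<circ> f = (\<Pi> \<circ> f)(snd a \<mapsto> t)"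
    by (rule upd_comp[OF Cons.prems])
  show ?case unfolding list.map sem_mk_cons fst_apsnd snd_apsnd Cons.IH[OF Cons.prems] e ..
qed

lemma fv_mk_ren: "inj f \<Longrightarrow> fv (mk (map (apsnd f) p) (ren_qf f \<phi>)) = f ` fv (mk p \<phi>)"
  by (simp add: fv_mk fv_qf_ren image_set_diff image_image)

lemma sw_img: "z \<notin> A \<Longrightarrow> sw x z ` A - {z} = A - {x}"
  unfolding sw_def by (auto simp: image_iff) 

lemma finite_fv_mk: "finite (fv (mk p \<phi>))"
  by (simp add: fv_mk finite_fv_qf)

lemma rename:
  fixes p :: "(bool \<times> 'v) list" and \<phi> :: "('v,'ap) qf"
  assumes inf: "infinite (UNIV :: 'v set)"
  shows "finite F \<Longrightarrow> \<exists>p' \<phi>'. map fst p' = map fst p \<and> fv (mk p' \<phi>') = fv (mk p \<phi>)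
     \<and> snd ` set p' \<inter> F = {} \<and> (\<forall>T \<Pi>. sem T \<Pi> (mk p' \<phi>') = sem T \<Pi> (mk p \<phi>))"
proof (induction p arbitrary: F)
  case Nil
  show ?case by (intro exI[of _ "[]"] exI[of _ \<phi>]) simp
next
  case (Cons a p)
  obtain q x where a: "a = (q, x)" by (cases a)
  from Cons.IH[of "insert x F"] Cons.prems obtain p' \<phi>' where IH:
    "map fst p' = map fst p" "fv (mk p' \<phi>') = fv (mk p \<phi>)" "snd ` set p' \<inter> insert x F = {}"
    "\<forall>T \<Pi>. sem T \<Pi> (mk p' \<phi>') = sem T \<Pi> (mk p \<phi>)" by auto
  have fin: "finite (insert x F \<union> fv (mk p \<phi>) \<union> snd ` set p')"
    using Cons.prems by (simp add: finite_fv_mk)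
  obtain z where z: "z \<notin> insert x F \<union> fv (mk p \<phi>) \<union> snd ` set p'"
    using ex_new_if_finite[OF inf fin] by blast
  define f where "f = sw x z"
  have inj: "inj f" unfolding f_def by (rule inj_sw)
  define p'' where "p'' = (q, z) # map (apsnd f) p'"
  define \<phi>'' where "\<phi>'' = ren_qf f \<phi>'"
  show ?case
  proof (intro exI[of _ p''] exI[of _ \<phi>''] conjI allI)
    show "map fst p'' = map fst (a # p)" using IH(1) a by (simp add: p''_def comp_def)
  next
    have "fv (mk p'' \<phi>'') = f ` fv (mk p \<phi>) - {z}"
      unfolding p''_def \<phi>''_def fv_mk_cons using fv_mk_ren[OF inj, of p' \<phi>'] IH(2) by simp
    also have "\<dots> = fv (mk p \<phi>) - {x}" unfolding f_def using z by (intro sw_img) auto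
    finally show "fv (mk p'' \<phi>'') = fv (mk (a # p) \<phi>)" by (simp add: fv_mk_cons a)
  next
    have "f ` snd ` set p' = snd ` set p'"
    proof -
      have "\<forall>v\<in>snd ` set p'. f v = v" using IH(3) z unfolding f_def sw_def by auto
      then show ?thesis by force
    qed
    moreover have "snd ` set p'' = insert z (f ` snd ` set p')"
      unfolding p''_def by (auto simp: image_image)
    ultimately show "snd ` set p'' \<inter> F = {}" using IH(3) z by auto
  next
    fix T \<Pi>
    have loc: "sem T ((\<Pi>(z \<mapsto> t)) \<circ> f) (mk p' \<phi>') = sem T (\<Pi>(x \<mapsto> t)) (mk p' \<phi>')" for t
    proof (rule sem_local, intro ballI)
      fix v assume "v \<in> fv (mk p' \<phi>')"
      then have "v \<noteq> z" using IH(2) z by auto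
      then show "((\<Pi>(z \<mapsto> t)) \<circ> f) v = (\<Pi>(x \<mapsto> t)) v" unfolding f_def sw_def by auto
    qed
    have "sem T \<Pi> (mk p'' \<phi>'') = semQ q T (\<lambda>t. sem T ((\<Pi>(z \<mapsto> t)) \<circ> f) (mk p' \<phi>'))"
      unfolding p''_def \<phi>''_def sem_mk_cons by (simp only: fst_conv snd_conv sem_mk_ren[OF inj])
    also have "\<dots> = semQ q T (\<lambda>t. sem T (\<Pi>(x \<mapsto> t)) (mk p \<phi>))"
      using loc IH(4) by simp
    also have "\<dots> = sem T \<Pi> (mk (a # p) \<phi>)" by (simp add: sem_mk_cons a)
    finally show "sem T \<Pi> (mk p'' \<phi>'') = sem T \<Pi> (mk (a # p) \<phi>)" .
  qed
qed

lemma okA_mono2: "okA A \<Pi> \<Longrightarrow> B \<subseteq> A \<Longrightarrow> okA B \<Pi>" by (rule okA_mono)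

lemma main:
  fixes \<psi> :: "('v,'ap) hyp"
  assumes inf: "infinite (UNIV :: 'v set)"
  shows "\<exists>p \<phi>. fv (mk p \<phi>) \<subseteq> fv \<psi>
    \<and> (\<forall>T \<Pi>. T \<noteq> {} \<and> (\<forall>t\<in>T. valid_trace t) \<and> okA (fv \<psi>) \<Pi> \<longrightarrow> sem T \<Pi> (mk p \<phi>) = sem T \<Pi> \<psi>)
    \<and> altsl b p \<le> alts (Some b) \<psi>
    \<and> length (filter fst p) = num_ex \<psi> \<and> length (filter (\<lambda>a. \<not> fst a) p) = num_all \<psi>"
proof (induction \<psi> arbitrary: b)
  case (Ex x \<psi>)
  from Ex.IH[of True] obtain p \<phi> where IH: "fv (mk p \<phi>) \<subseteq> fv \<psi>"
    "\<forall>T \<Pi>. T \<noteq> {} \<and> (\<forall>t\<in>T. valid_trace t) \<and> okA (fv \<psi>) \<Pi> \<longrightarrow> sem T \<Pi> (mk p \<phi>) = sem T \<Pi> \<psi>"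
    "altsl True p \<le> alts (Some True) \<psi>"
    "length (filter fst p) = num_ex \<psi>" "length (filter (\<lambda>a. \<not> fst a) p) = num_all \<psi>" by blast
  have mk: "mk ((True, x) # p) \<phi> = Ex x (mk p \<phi>)" by (simp add: mk.simps(2))
  show ?case
  proof (intro exI[of _ "(True, x) # p"] exI[of _ \<phi>] conjI allI impI)
    show "fv (mk ((True, x) # p) \<phi>) \<subseteq> fv (Ex x \<psi>)" using IH(1) unfolding mk by auto
  next
    fix T :: "'ap trace set" and \<Pi> :: "('v,'ap) assignment"
    assume H: "T \<noteq> {} \<and> (\<forall>t\<in>T. valid_trace t) \<and> okA (fv (Ex x \<psi>)) \<Pi>"
    have "\<And>t. t \<in> T \<Longrightarrow> sem T (\<Pi>(x \<mapsto> t)) (mk p \<phi>) = sem T (\<Pi>(x \<mapsto> t)) \<psi>"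
      using IH(2) H by (auto intro: okA_upd)
    then show "sem T \<Pi> (mk ((True, x) # p) \<phi>) = sem T \<Pi> (Ex x \<psi>)" unfolding mk
      by (simp cong: SUP_cong)
  qed (use IH in \<open>auto simp: mk\<close>)
next
  case (All x \<psi>)
  from All.IH[of False] obtain p \<phi> where IH: "fv (mk p \<phi>) \<subseteq> fv \<psi>"
    "\<forall>T \<Pi>. T \<noteq> {} \<and> (\<forall>t\<in>T. valid_trace t) \<and> okA (fv \<psi>) \<Pi> \<longrightarrow> sem T \<Pi> (mk p \<phi>) = sem T \<Pi> \<psi>"
    "altsl False p \<le> alts (Some False) \<psi>"
    "length (filter fst p) = num_ex \<psi>" "length (filter (\<lambda>a. \<not> fst a) p) = num_all \<psi>" by blast
  have mk: "mk ((False, x) # p) \<phi> = All x (mk p \<phi>)" by (simp add: mk.simps(2))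
  show ?case
  proof (intro exI[of _ "(False, x) # p"] exI[of _ \<phi>] conjI allI impI)
    show "fv (mk ((False, x) # p) \<phi>) \<subseteq> fv (All x \<psi>)" using IH(1) unfolding mk by auto
  next
    fix T :: "'ap trace set" and \<Pi> :: "('v,'ap) assignment"
    assume H: "T \<noteq> {} \<and> (\<forall>t\<in>T. valid_trace t) \<and> okA (fv (All x \<psi>)) \<Pi>"
    have "\<And>t. t \<in> T \<Longrightarrow> sem T (\<Pi>(x \<mapsto> t)) (mk p \<phi>) = sem T (\<Pi>(x \<mapsto> t)) \<psi>"
      using IH(2) H by (auto intro: okA_upd)
    then show "sem T \<Pi> (mk ((False, x) # p) \<phi>) = sem T \<Pi> (All x \<psi>)" unfolding mk
      by (simp cong: INF_cong)
  qed (use IH in \<open>auto simp: mk\<close>)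
next
  case (Qf \<phi>)
  show ?case by (intro exI[of _ "[]"] exI[of _ \<phi>]) simp
next
  case (HOr \<psi>1 \<psi>2)
  from HOr.IH(1)[of b] obtain p1 \<phi>1 where I1: "fv (mk p1 \<phi>1) \<subseteq> fv \<psi>1"
    "\<forall>T \<Pi>. T \<noteq> {} \<and> (\<forall>t\<in>T. valid_trace t) \<and> okA (fv \<psi>1) \<Pi> \<longrightarrow> sem T \<Pi> (mk p1 \<phi>1) = sem T \<Pi> \<psi>1"
    "altsl b p1 \<le> alts (Some b) \<psi>1"
    "length (filter fst p1) = num_ex \<psi>1" "length (filter (\<lambda>a. \<not> fst a) p1) = num_all \<psi>1" by blast
  from HOr.IH(2)[of b] obtain p2 \<phi>2 where I2: "fv (mk p2 \<phi>2) \<subseteq> fv \<psi>2"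
    "\<forall>T \<Pi>. T \<noteq> {} \<and> (\<forall>t\<in>T. valid_trace t) \<and> okA (fv \<psi>2) \<Pi> \<longrightarrow> sem T \<Pi> (mk p2 \<phi>2) = sem T \<Pi> \<psi>2"
    "altsl b p2 \<le> alts (Some b) \<psi>2"
    "length (filter fst p2) = num_ex \<psi>2" "length (filter (\<lambda>a. \<not> fst a) p2) = num_all \<psi>2" by blast
  obtain p1' \<phi>1' where R1: "map fst p1' = map fst p1" "fv (mk p1' \<phi>1') = fv (mk p1 \<phi>1)"
    "snd ` set p1' \<inter> fv (mk p2 \<phi>2) = {}" "\<forall>T \<Pi>. sem T \<Pi> (mk p1' \<phi>1') = sem T \<Pi> (mk p1 \<phi>1)"
    using rename[OF inf finite_fv_mk, of p1 \<phi>1 p2 \<phi>2] by blast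
  have fin: "finite (fv (mk p1' \<phi>1') \<union> snd ` set p1')" by (simp add: finite_fv_mk)
  obtain p2' \<phi>2' where R2: "map fst p2' = map fst p2" "fv (mk p2' \<phi>2') = fv (mk p2 \<phi>2)"
    "snd ` set p2' \<inter> (fv (mk p1' \<phi>1') \<union> snd ` set p1') = {}" "\<forall>T \<Pi>. sem T \<Pi> (mk p2' \<phi>2') = sem T \<Pi> (mk p2 \<phi>2)"
    using rename[OF inf fin, of p2 \<phi>2] by blast
  have d1: "snd ` set p1' \<inter> fv_qf \<phi>2' = {}"
  proof -
    have "fv_qf \<phi>2' \<subseteq> fv (mk p2' \<phi>2') \<union> snd ` set p2'" by (auto simp: fv_mk)
    then show ?thesis using R1(3) R2(2) R2(3) by blast
  qed
  have d2: "snd ` set p2' \<inter> fv_qf \<phi>1' = {}"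
  proof -
    have "fv_qf \<phi>1' \<subseteq> fv (mk p1' \<phi>1') \<union> snd ` set p1'" by (auto simp: fv_mk)
    then show ?thesis using R2(3) by blast
  qed
  show ?case
  proof (intro exI[of _ "mergep b p1' p2'"] exI[of _ "cqf True \<phi>1' \<phi>2'"] conjI allI impI)
    have "fv (mk (mergep b p1' p2') (cqf True \<phi>1' \<phi>2')) \<subseteq> fv (mk p1' \<phi>1') \<union> fv (mk p2' \<phi>2')"
      by (auto simp: fv_mk fv_cqf set_mergep)
    then show "fv (mk (mergep b p1' p2') (cqf True \<phi>1' \<phi>2')) \<subseteq> fv (HOr \<psi>1 \<psi>2)"
      using R1(2) R2(2) I1(1) I2(1) by auto
  next
    fix T :: "'ap trace set" and \<Pi> :: "('v,'ap) assignment"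
    assume H: "T \<noteq> {} \<and> (\<forall>t\<in>T. valid_trace t) \<and> okA (fv (HOr \<psi>1 \<psi>2)) \<Pi>"
    have o: "okA (fv \<psi>1 \<union> fv \<psi>2) \<Pi>" using H by simp
    have o1: "okA (fv \<psi>1) \<Pi>" "okA (fv \<psi>2) \<Pi>" by (rule okA_mono[OF o], blast)+
    have o1': "okA (fv (mk p1' \<phi>1')) \<Pi>" by (rule okA_mono[OF o1(1)]) (use R1(2) I1(1) in simp)
    have o2': "okA (fv (mk p2' \<phi>2')) \<Pi>" by (rule okA_mono[OF o1(2)]) (use R2(2) I2(1) in simp)
    have "sem T \<Pi> (mk (mergep b p1' p2') (cqf True \<phi>1' \<phi>2')) = opr True (sem T \<Pi> (mk p1' \<phi>1')) (sem T \<Pi> (mk p2' \<phi>2'))"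
      using d1 d2 H o1' o2' by (intro mergep_sem) auto
    also have "\<dots> = sem T \<Pi> (HOr \<psi>1 \<psi>2)"
      using R1(4) R2(4) I1(2) I2(2) H o1 by (simp add: opr_def)
    finally show "sem T \<Pi> (mk (mergep b p1' p2') (cqf True \<phi>1' \<phi>2')) = sem T \<Pi> (HOr \<psi>1 \<psi>2)" .
  next
    have "altsl b (mergep b p1' p2') \<le> max (altsl b p1') (altsl b p2')" by (rule altsl_mergep)
    also have "\<dots> = max (altsl b p1) (altsl b p2)" using altsl_fst[OF R1(1)] altsl_fst[OF R2(1)] by simp
    finally show "altsl b (mergep b p1' p2') \<le> alts (Some b) (HOr \<psi>1 \<psi>2)" using I1(3) I2(3) by simp
  next
    show "length (filter fst (mergep b p1' p2')) = num_ex (HOr \<psi>1 \<psi>2)"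
      using filter_fst1[OF R1(1)] filter_fst1[OF R2(1)] I1(4) I2(4) by (simp add: filter_mergep)
  next
    show "length (filter (\<lambda>a. \<not> fst a) (mergep b p1' p2')) = num_all (HOr \<psi>1 \<psi>2)"
      using filter_fst2[OF R1(1)] filter_fst2[OF R2(1)] I1(5) I2(5) by (simp add: filter_mergep)
  qed
next
  case (HAnd \<psi>1 \<psi>2)
  from HAnd.IH(1)[of b] obtain p1 \<phi>1 where I1: "fv (mk p1 \<phi>1) \<subseteq> fv \<psi>1"
    "\<forall>T \<Pi>. T \<noteq> {} \<and> (\<forall>t\<in>T. valid_trace t) \<and> okA (fv \<psi>1) \<Pi> \<longrightarrow> sem T \<Pi> (mk p1 \<phi>1) = sem T \<Pi> \<psi>1"
    "altsl b p1 \<le> alts (Some b) \<psi>1"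
    "length (filter fst p1) = num_ex \<psi>1" "length (filter (\<lambda>a. \<not> fst a) p1) = num_all \<psi>1" by blast
  from HAnd.IH(2)[of b] obtain p2 \<phi>2 where I2: "fv (mk p2 \<phi>2) \<subseteq> fv \<psi>2"
    "\<forall>T \<Pi>. T \<noteq> {} \<and> (\<forall>t\<in>T. valid_trace t) \<and> okA (fv \<psi>2) \<Pi> \<longrightarrow> sem T \<Pi> (mk p2 \<phi>2) = sem T \<Pi> \<psi>2"
    "altsl b p2 \<le> alts (Some b) \<psi>2"
    "length (filter fst p2) = num_ex \<psi>2" "length (filter (\<lambda>a. \<not> fst a) p2) = num_all \<psi>2" by blast
  obtain p1' \<phi>1' where R1: "map fst p1' = map fst p1" "fv (mk p1' \<phi>1') = fv (mk p1 \<phi>1)"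
    "snd ` set p1' \<inter> fv (mk p2 \<phi>2) = {}" "\<forall>T \<Pi>. sem T \<Pi> (mk p1' \<phi>1') = sem T \<Pi> (mk p1 \<phi>1)"
    using rename[OF inf finite_fv_mk, of p1 \<phi>1 p2 \<phi>2] by blast
  have fin: "finite (fv (mk p1' \<phi>1') \<union> snd ` set p1')" by (simp add: finite_fv_mk)
  obtain p2' \<phi>2' where R2: "map fst p2' = map fst p2" "fv (mk p2' \<phi>2') = fv (mk p2 \<phi>2)"
    "snd ` set p2' \<inter> (fv (mk p1' \<phi>1') \<union> snd ` set p1') = {}" "\<forall>T \<Pi>. sem T \<Pi> (mk p2' \<phi>2') = sem T \<Pi> (mk p2 \<phi>2)"
    using rename[OF inf fin, of p2 \<phi>2] by blast
  have d1: "snd ` set p1' \<inter> fv_qf \<phi>2' = {}"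
  proof -
    have "fv_qf \<phi>2' \<subseteq> fv (mk p2' \<phi>2') \<union> snd ` set p2'" by (auto simp: fv_mk)
    then show ?thesis using R1(3) R2(2) R2(3) by blast
  qed
  have d2: "snd ` set p2' \<inter> fv_qf \<phi>1' = {}"
  proof -
    have "fv_qf \<phi>1' \<subseteq> fv (mk p1' \<phi>1') \<union> snd ` set p1'" by (auto simp: fv_mk)
    then show ?thesis using R2(3) by blast
  qed
  show ?case
  proof (intro exI[of _ "mergep b p1' p2'"] exI[of _ "cqf False \<phi>1' \<phi>2'"] conjI allI impI)
    have "fv (mk (mergep b p1' p2') (cqf False \<phi>1' \<phi>2')) \<subseteq> fv (mk p1' \<phi>1') \<union> fv (mk p2' \<phi>2')"
      by (auto simp: fv_mk fv_cqf set_mergep)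
    then show "fv (mk (mergep b p1' p2') (cqf False \<phi>1' \<phi>2')) \<subseteq> fv (HAnd \<psi>1 \<psi>2)"
      using R1(2) R2(2) I1(1) I2(1) by auto
  next
    fix T :: "'ap trace set" and \<Pi> :: "('v,'ap) assignment"
    assume H: "T \<noteq> {} \<and> (\<forall>t\<in>T. valid_trace t) \<and> okA (fv (HAnd \<psi>1 \<psi>2)) \<Pi>"
    have o: "okA (fv \<psi>1 \<union> fv \<psi>2) \<Pi>" using H by simp
    have o1: "okA (fv \<psi>1) \<Pi>" "okA (fv \<psi>2) \<Pi>" by (rule okA_mono[OF o], blast)+
    have o1': "okA (fv (mk p1' \<phi>1')) \<Pi>" by (rule okA_mono[OF o1(1)]) (use R1(2) I1(1) in simp)
    have o2': "okA (fv (mk p2' \<phi>2')) \<Pi>" by (rule okA_mono[OF o1(2)]) (use R2(2) I2(1) in simp)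
    have "sem T \<Pi> (mk (mergep b p1' p2') (cqf False \<phi>1' \<phi>2')) = opr False (sem T \<Pi> (mk p1' \<phi>1')) (sem T \<Pi> (mk p2' \<phi>2'))"
      using d1 d2 H o1' o2' by (intro mergep_sem) auto
    also have "\<dots> = sem T \<Pi> (HAnd \<psi>1 \<psi>2)"
      using R1(4) R2(4) I1(2) I2(2) H o1 by (simp add: opr_def)
    finally show "sem T \<Pi> (mk (mergep b p1' p2') (cqf False \<phi>1' \<phi>2')) = sem T \<Pi> (HAnd \<psi>1 \<psi>2)" .
  next
    have "altsl b (mergep b p1' p2') \<le> max (altsl b p1') (altsl b p2')" by (rule altsl_mergep)
    also have "\<dots> = max (altsl b p1) (altsl b p2)" using altsl_fst[OF R1(1)] altsl_fst[OF R2(1)] by simp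
    finally show "altsl b (mergep b p1' p2') \<le> alts (Some b) (HAnd \<psi>1 \<psi>2)" using I1(3) I2(3) by simp
  next
    show "length (filter fst (mergep b p1' p2')) = num_ex (HAnd \<psi>1 \<psi>2)"
      using filter_fst1[OF R1(1)] filter_fst1[OF R2(1)] I1(4) I2(4) by (simp add: filter_mergep)
  next
    show "length (filter (\<lambda>a. \<not> fst a) (mergep b p1' p2')) = num_all (HAnd \<psi>1 \<psi>2)"
      using filter_fst2[OF R1(1)] filter_fst2[OF R2(1)] I1(5) I2(5) by (simp add: filter_mergep)
  qed
qed

theorem mainTheorem5:
  fixes \<psi> :: "('v, 'ap::finite) hyp"
  assumes "infinite (UNIV :: 'v set)"
  shows "\<exists>\<psi>'. prenex \<psi>'
    \<and> (\<forall>(T :: 'ap trace set) (\<Pi> :: ('v,'ap) assignment).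
          T \<noteq> {} \<and> (\<forall>t\<in>T. valid_trace t) \<and> fv \<psi> \<subseteq> dom \<Pi> \<and> (\<forall>t\<in>ran \<Pi>. valid_trace t)
          \<longrightarrow> sem T \<Pi> \<psi>' = sem T \<Pi> \<psi>)
    \<and> alt_depth \<psi>' \<le> alt_depth \<psi> + 1
    \<and> num_ex \<psi>' = num_ex \<psi> \<and> num_all \<psi>' = num_all \<psi>"
proof -
  obtain p \<phi> where M: "fv (mk p \<phi>) \<subseteq> fv \<psi>"
    "\<forall>T \<Pi>. T \<noteq> {} \<and> (\<forall>t\<in>T. valid_trace t) \<and> okA (fv \<psi>) \<Pi> \<longrightarrow> sem T \<Pi> (mk p \<phi>) = sem T \<Pi> \<psi>"
    "altsl True p \<le> alts (Some True) \<psi>"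
    "length (filter fst p) = num_ex \<psi>" "length (filter (\<lambda>a. \<not> fst a) p) = num_all \<psi>"
    using main[OF assms, of \<psi> True] by blast
  show ?thesis
  proof (intro exI[of _ "mk p \<phi>"] conjI allI impI)
    show "prenex (mk p \<phi>)" by (rule prenex_mk)
  next
    fix T :: "'ap trace set" and \<Pi> :: "('v,'ap) assignment"
    assume H: "T \<noteq> {} \<and> (\<forall>t\<in>T. valid_trace t) \<and> fv \<psi> \<subseteq> dom \<Pi> \<and> (\<forall>t\<in>ran \<Pi>. valid_trace t)"
    have "okA (fv \<psi>) \<Pi>" unfolding okA_def
    proof
      fix v assume "v \<in> fv \<psi>"
      then obtain t where t: "\<Pi> v = Some t" using H by blast
      then have "t \<in> ran \<Pi>" by (rule ranI)
      then show "\<exists>t. \<Pi> v = Some t \<and> valid_trace t" using t H by blast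
    qed
    then show "sem T \<Pi> (mk p \<phi>) = sem T \<Pi> \<psi>" using M(2) H by blast
  next
    have "alt_depth (mk p \<phi>) \<le> alts (Some True) (mk p \<phi>)"
      unfolding alt_depth_def by (rule alts_None_le)
    also have "\<dots> \<le> alts (Some True) \<psi>" using M(3) by (simp add: alts_mk)
    also have "\<dots> \<le> alt_depth \<psi> + 1" unfolding alt_depth_def by (rule alts_Some_le)
    finally show "alt_depth (mk p \<phi>) \<le> alt_depth \<psi> + 1" .
  next
    show "num_ex (mk p \<phi>) = num_ex \<psi>" using M(4) by (simp add: num_ex_mk)
  next
    show "num_all (mk p \<phi>) = num_all \<psi>" using M(5) by (simp add: num_all_mk)
  qed
qed

end
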